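(* Let $q$ be a prime power, let $n\ge 2$ and $K\ge 1$ be fixed integers, and fix a receiver index $j\in\{1,\dots,n\}$. Let $\mathbf H[t_0],\mathbf H[t_1],\dots,\mathbf H[t_K]$ be independent random $n\times n$ matrices, each with entries drawn independently and uniformly from $\mathbb F_q\setminus\{0\}$. For each $s$ let $\mathbf h_j^{\mathrm{int}}[t_s]=(h_{j1}[t_s],\dots,h_{j\,j-1}[t_s],h_{j\,j+1}[t_s],\dots,h_{jn}[t_s])\in\mathbb F_q^{\,n-1}$ be the interference vector of receiver $j$ at time $t_s$. Then, conditional on the event that the vectors $\mathbf h_j^{\mathrm{int}}[t_0],\dots,\mathbf h_j^{\mathrm{int}}[t_K]$ are linearly dependent over $\mathbb F_q$, the probability that receiver $j$ can recover its message from $\mathbf H[t_0],\dots,\mathbf H[t_K]$ is $1-O(q^{-1})$ as $q\to\infty$.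
   Context: Receiver $j$ "can recover its message from" matrices $\mathbf M_0,\dots,\mathbf M_K\in\mathbb F_q^{n\times n}$ means: there exist scalars $\lambda_0,\dots,\lambda_K\in\mathbb F_q$ such that $\sum_{s=0}^K\lambda_s(\mathbf M_s)_{jj}\neq 0$ and $\sum_{s=0}^K\lambda_s(\mathbf M_s)_{ji}=0$ for every $i\neq j$ (equivalently $\sum_s \lambda_s\mathbf h_j^{\mathrm{int}}[t_s]=\mathbf 0$ while the corresponding combination of diagonal entries is nonzero). *)

theory Defs
  imports Complex_Main "HOL-Algebra.Ring" "HOL-Library.FuncSet"
begin

text \<open>Channel realisations: H (s, r, c) is entry (r, c) of the matrix H[t_s],
  for s in {0..K} and 0-based row/column indices r, c < n.
  Every entry ranges over the nonzero field elements; the uniform independent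
  distribution is the uniform distribution on this finite set.\<close>
definition channel_set :: "('a, 'm) ring_scheme \<Rightarrow> nat \<Rightarrow> nat \<Rightarrow> (nat \<times> nat \<times> nat \<Rightarrow> 'a) set" where
  "channel_set R n K = ({0..K} \<times> {..<n} \<times> {..<n}) \<rightarrow>\<^sub>E (carrier R - {\<zero>\<^bsub>R\<^esub>})"

definition int_dependent :: "('a, 'm) ring_scheme \<Rightarrow> nat \<Rightarrow> nat \<Rightarrow> nat \<Rightarrow> (nat \<times> nat \<times> nat \<Rightarrow> 'a) \<Rightarrow> bool" where
  "int_dependent R n K j H \<longleftrightarrow>
     (\<exists>c. (\<forall>s\<in>{0..K}. c s \<in> carrier R) \<and> (\<exists>s\<in>{0..K}. c s \<noteq> \<zero>\<^bsub>R\<^esub>) \<and>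
        (\<forall>i<n. i \<noteq> j \<longrightarrow> finsum R (\<lambda>s. c s \<otimes>\<^bsub>R\<^esub> H (s, j, i)) {0..K} = \<zero>\<^bsub>R\<^esub>))"

definition can_recover :: "('a, 'm) ring_scheme \<Rightarrow> nat \<Rightarrow> nat \<Rightarrow> nat \<Rightarrow> (nat \<times> nat \<times> nat \<Rightarrow> 'a) \<Rightarrow> bool" where
  "can_recover R n K j H \<longleftrightarrow>
     (\<exists>c. (\<forall>s\<in>{0..K}. c s \<in> carrier R) \<and>
        finsum R (\<lambda>s. c s \<otimes>\<^bsub>R\<^esub> H (s, j, j)) {0..K} \<noteq> \<zero>\<^bsub>R\<^esub> \<and>
        (\<forall>i<n. i \<noteq> j \<longrightarrow> finsum R (\<lambda>s. c s \<otimes>\<^bsub>R\<^esub> H (s, j, i)) {0..K} = \<zero>\<^bsub>R\<^esub>))"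

definition cond_prob_recover :: "('a, 'm) ring_scheme \<Rightarrow> nat \<Rightarrow> nat \<Rightarrow> nat \<Rightarrow> real" where
  "cond_prob_recover R n K j =
     real (card {H \<in> channel_set R n K. int_dependent R n K j H \<and> can_recover R n K j H})
     / real (card {H \<in> channel_set R n K. int_dependent R n K j H})"

end

theory Submission
  imports Defs
begin

lemma (in field) sum_unique_entry:
  assumes fin: "finite A" and kA: "k \<in> A"
    and c: "\<forall>s\<in>A. c s \<in> carrier R" and ck: "c k \<noteq> \<zero>"
    and f: "\<forall>s\<in>A. f s \<in> carrier R" and g: "\<forall>s\<in>A. g s \<in> carrier R"
    and agree: "\<forall>s\<in>A. s \<noteq> k \<longrightarrow> f s = g s"
    and sf: "finsum R (\<lambda>s. c s \<otimes> f s) A = \<zero>"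
    and sg: "finsum R (\<lambda>s. c s \<otimes> g s) A = \<zero>"
  shows "f k = g k"
proof -
  have Aeq: "A = insert k (A - {k})" using kA by auto
  define X where "X = finsum R (\<lambda>s. c s \<otimes> f s) (A - {k})"
  have X': "X = finsum R (\<lambda>s. c s \<otimes> g s) (A - {k})"
    unfolding X_def by (rule finsum_cong) (use c f g agree in auto)
  have Xc: "X \<in> carrier R" unfolding X_def by (rule finsum_closed) (use c f in auto)
  have "finsum R (\<lambda>s. c s \<otimes> f s) A = c k \<otimes> f k \<oplus> X"
    unfolding X_def by (subst Aeq, subst finsum_insert) (use fin c f kA in auto)
  moreover have "finsum R (\<lambda>s. c s \<otimes> g s) A = c k \<otimes> g k \<oplus> X"
    unfolding X' by (subst Aeq, subst finsum_insert) (use fin c g kA in auto)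
  ultimately have e: "c k \<otimes> f k \<oplus> X = c k \<otimes> g k \<oplus> X" using sf sg by simp
  have ckc: "c k \<in> carrier R" "f k \<in> carrier R" "g k \<in> carrier R" using c f g kA by auto
  have "c k \<otimes> f k = c k \<otimes> g k"
    using e ckc Xc add.right_cancel[of X "c k \<otimes> f k" "c k \<otimes> g k"] by simp
  then show ?thesis using m_lcancel[OF ck ckc] by simp
qed

definition depP :: "('a, 'm) ring_scheme \<Rightarrow> nat \<Rightarrow> nat \<Rightarrow> nat \<Rightarrow> (nat \<times> nat \<times> nat \<Rightarrow> 'a) \<Rightarrow> (nat \<Rightarrow> 'a) \<Rightarrow> bool" where
  "depP R n K j H c \<longleftrightarrow> (\<forall>s\<in>{0..K}. c s \<in> carrier R) \<and> (\<exists>s\<in>{0..K}. c s \<noteq> \<zero>\<^bsub>R\<^esub>) \<and>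
        (\<forall>i<n. i \<noteq> j \<longrightarrow> finsum R (\<lambda>s. c s \<otimes>\<^bsub>R\<^esub> H (s, j, i)) {0..K} = \<zero>\<^bsub>R\<^esub>)"

definition cf where "cf R n K j H = (SOME c. depP R n K j H c)"
definition kf where "kf R n K j H = (SOME s. s \<in> {0..K} \<and> cf R n K j H s \<noteq> \<zero>\<^bsub>R\<^esub>)"
definition psi where "psi R n K j H v = H((kf R n K j H, j, j) := v)"

lemma depP_cong:
  assumes "\<forall>s i. i \<noteq> j \<longrightarrow> H' (s,j,i) = H (s,j,i)"
  shows "depP R n K j H' = depP R n K j H"
  using assms unfolding depP_def by (intro ext) simp

lemma cf_kf_cong:
  assumes "\<forall>s i. i \<noteq> j \<longrightarrow> H' (s,j,i) = H (s,j,i)"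
  shows "cf R n K j H' = cf R n K j H" "kf R n K j H' = kf R n K j H"
proof -
  show 1: "cf R n K j H' = cf R n K j H" unfolding cf_def by (simp add: depP_cong[OF assms])
  show "kf R n K j H' = kf R n K j H" unfolding kf_def 1 ..
qed

lemma psi_agree: "\<forall>s i. i \<noteq> j \<longrightarrow> psi R n K j H v (s,j,i) = H (s,j,i)"
  unfolding psi_def by auto

lemma dep_facts:
  assumes "int_dependent R n K j H"
  shows "depP R n K j H (cf R n K j H)" "kf R n K j H \<in> {0..K}"
    "cf R n K j H (kf R n K j H) \<noteq> \<zero>\<^bsub>R\<^esub>"
proof -
  have "\<exists>c. depP R n K j H c" using assms unfolding int_dependent_def depP_def by blast
  then show d: "depP R n K j H (cf R n K j H)" unfolding cf_def by (rule someI_ex)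
  then have "\<exists>s. s \<in> {0..K} \<and> cf R n K j H s \<noteq> \<zero>\<^bsub>R\<^esub>" unfolding depP_def by blast
  then have "kf R n K j H \<in> {0..K} \<and> cf R n K j H (kf R n K j H) \<noteq> \<zero>\<^bsub>R\<^esub>"
    unfolding kf_def by (rule someI_ex)
  then show "kf R n K j H \<in> {0..K}" "cf R n K j H (kf R n K j H) \<noteq> \<zero>\<^bsub>R\<^esub>" by auto
qed

lemma bad_sum:
  assumes "int_dependent R n K j H" "\<not> can_recover R n K j H"
  shows "finsum R (\<lambda>s. cf R n K j H s \<otimes>\<^bsub>R\<^esub> H (s, j, j)) {0..K} = \<zero>\<^bsub>R\<^esub>"
  using dep_facts(1)[OF assms(1)] assms(2) unfolding depP_def can_recover_def by blast

lemma dep_psi: "int_dependent R n K j (psi R n K j H v) = int_dependent R n K j H"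
proof -
  have "int_dependent R n K j H' = Ex (depP R n K j H')" for H'
    unfolding int_dependent_def depP_def by blast
  then show ?thesis using depP_cong[OF psi_agree[of j R n K H v], of R n K] by simp
qed

lemma (in field) count_bad:
  assumes fin: "finite (carrier R)" and jn: "j < n"
  shows "card {H \<in> channel_set R n K. int_dependent R n K j H \<and> \<not> can_recover R n K j H}
          * (card (carrier R) - 1)
         \<le> card {H \<in> channel_set R n K. int_dependent R n K j H}"
proof -
  define S where "S = channel_set R n K"
  define D where "D = {H \<in> S. int_dependent R n K j H}"
  define B where "B = {H \<in> S. int_dependent R n K j H \<and> \<not> can_recover R n K j H}"
  define F where "F = carrier R - {\<zero>}"
  have cardF: "card F = card (carrier R) - 1" unfolding F_def using fin by (simp add: card_Diff_singleton)
  have finS: "finite S" unfolding S_def channel_set_def by (rule finite_PiE) (use fin in auto)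
  have finD: "finite D" unfolding D_def using finS by simp
  have img1: "psi R n K j H v \<in> D" if H: "H \<in> B" and v: "v \<in> F" for H v
  proof -
    have k: "kf R n K j H \<in> {0..K}" using dep_facts(2) H unfolding B_def by blast
    have "psi R n K j H v \<in> S" using H v k jn
      unfolding psi_def S_def B_def F_def channel_set_def PiE_def Pi_def extensional_def by auto
    then show "psi R n K j H v \<in> D"
      using H unfolding D_def B_def by (simp add: dep_psi)
  qed
  have img: "(\<lambda>(H,v). psi R n K j H v) ` (B \<times> F) \<subseteq> D" using img1 by auto
  have inj: "inj_on (\<lambda>(H,v). psi R n K j H v) (B \<times> F)"
  proof (rule inj_onI, clarify)
    fix H v H' v'
    assume H: "H \<in> B" and v: "v \<in> F" and H': "H' \<in> B" and v': "v' \<in> F"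
      and eq: "psi R n K j H v = psi R n K j H' v'"
    have ag: "\<forall>s i. i \<noteq> j \<longrightarrow> H' (s,j,i) = H (s,j,i)"
      using psi_agree[of j R n K H v] psi_agree[of j R n K H' v'] eq by metis
    note cc = cf_kf_cong[OF ag]
    define k where "k = kf R n K j H"
    define c where "c = cf R n K j H"
    have kk: "kf R n K j H' = k" "cf R n K j H' = c" using cc unfolding k_def c_def by auto
    have vv: "v = v'" using fun_cong[OF eq, of "(k,j,j)"] kk unfolding psi_def k_def by simp
    have other: "H x = H' x" if "x \<noteq> (k,j,j)" for x
      using fun_cong[OF eq, of x] kk that unfolding psi_def k_def by simp
    have Hd: "int_dependent R n K j H" "\<not> can_recover R n K j H" using H unfolding B_def by auto
    have H'd: "int_dependent R n K j H'" "\<not> can_recover R n K j H'" using H' unfolding B_def by auto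
    have HS: "H \<in> S" "H' \<in> S" using H H' unfolding B_def by auto
    have car: "\<forall>s\<in>{0..K}. H (s,j,j) \<in> carrier R" "\<forall>s\<in>{0..K}. H' (s,j,j) \<in> carrier R"
      using HS jn unfolding S_def channel_set_def PiE_def Pi_def by auto
    have "H (k,j,j) = H' (k,j,j)"
    proof (rule sum_unique_entry[of "{0..K}" k c "\<lambda>s. H (s,j,j)" "\<lambda>s. H' (s,j,j)", simplified])
      show "k \<le> K" using dep_facts(2)[OF Hd(1)] unfolding k_def by simp
      show "\<forall>s\<in>{0..K}. c s \<in> carrier R" using dep_facts(1)[OF Hd(1)] unfolding c_def depP_def by blast
      show "c k \<noteq> \<zero>" using dep_facts(3)[OF Hd(1)] unfolding c_def k_def .
      show "\<forall>s\<in>{0..K}. H (s,j,j) \<in> carrier R" "\<forall>s\<in>{0..K}. H' (s,j,j) \<in> carrier R" using car by auto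
      show "\<forall>s\<in>{0..K}. s \<noteq> k \<longrightarrow> H (s,j,j) = H' (s,j,j)" using other by auto
      show "(\<Oplus>s\<in>{0..K}. c s \<otimes> H (s, j, j)) = \<zero>" using bad_sum[OF Hd] unfolding c_def .
      show "(\<Oplus>s\<in>{0..K}. c s \<otimes> H' (s, j, j)) = \<zero>" using bad_sum[OF H'd] kk by simp
    qed
    then have "H = H'" using other by (intro ext) metis
    then show "H = H' \<and> v = v'" using vv by simp
  qed
  have "card (B \<times> F) \<le> card D" using card_inj_on_le[OF inj img finD] .
  then show ?thesis unfolding B_def D_def S_def cardF[symmetric] by (simp add: card_cartesian_product)
qed

lemma (in field) dep_nonempty:
  assumes K: "K \<ge> 1" and jn: "j < n"
  shows "{H \<in> channel_set R n K. int_dependent R n K j H} \<noteq> {}"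
proof -
  define H :: "nat \<times> nat \<times> nat \<Rightarrow> 'a" where "H = (\<lambda>x\<in>{0..K} \<times> {..<n} \<times> {..<n}. \<one>)"
  define c :: "nat \<Rightarrow> 'a" where "c = (\<lambda>s. if s = 0 then \<one> else if s = 1 then \<ominus> \<one> else \<zero>)"
  have HS: "H \<in> channel_set R n K" unfolding H_def channel_set_def by auto
  have cc: "\<forall>s\<in>{0..K}. c s \<in> carrier R" unfolding c_def by auto
  have sum0: "finsum R c {0..K} = \<zero>"
  proof -
    have split: "{0..K} = insert 0 (insert 1 {2..K})" using K by auto
    have z: "finsum R c {2..K} = \<zero>"
    proof -
      have "finsum R c {2..K} = finsum R (\<lambda>_. \<zero>) {2..K}"
        by (rule finsum_cong) (auto simp: c_def)
      then show ?thesis by simp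
    qed
    have cP: "c \<in> A \<rightarrow> carrier R" for A unfolding c_def by auto
    have cP2: "c x \<in> carrier R" for x unfolding c_def by auto
    have "finsum R c (insert 1 {2..K}) = c 1 \<oplus> finsum R c {2..K}"
      by (rule finsum_insert) (auto intro: cP cP2)
    also have "\<dots> = \<ominus> \<one>" unfolding z by (simp add: c_def)
    finally have s1: "finsum R c (insert 1 {2..K}) = \<ominus> \<one>" .
    have "finsum R c (insert 0 (insert 1 {2..K})) = c 0 \<oplus> finsum R c (insert 1 {2..K})"
      by (rule finsum_insert) (auto intro: cP cP2)
    also have "\<dots> = \<one> \<oplus> \<ominus> \<one>" unfolding s1 by (simp add: c_def)
    also have "\<dots> = \<zero>" by (rule r_neg) simp
    finally show ?thesis unfolding split .
  qed
  have "int_dependent R n K j H"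
    unfolding int_dependent_def
  proof (intro exI[of _ c] conjI)
    show "\<forall>s\<in>{0..K}. c s \<in> carrier R" by (rule cc)
    show "\<exists>s\<in>{0..K}. c s \<noteq> \<zero>" by (rule bexI[of _ 0]) (auto simp: c_def)
    show "\<forall>i<n. i \<noteq> j \<longrightarrow> (\<Oplus>s\<in>{0..K}. c s \<otimes> H (s, j, i)) = \<zero>"
    proof (intro allI impI)
      fix i assume "i < n" "i \<noteq> j"
      then have "(\<Oplus>s\<in>{0..K}. c s \<otimes> H (s, j, i)) = finsum R c {0..K}"
        using jn cc by (intro finsum_cong) (auto simp: H_def)
      then show "(\<Oplus>s\<in>{0..K}. c s \<otimes> H (s, j, i)) = \<zero>" using sum0 by simp
    qed
  qed
  then show ?thesis using HS by auto
qed

lemma prob_bound: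
  fixes R :: "('a, 'm) ring_scheme"
  assumes F: "field R" and fin: "finite (carrier R)" and jn: "j < n" and K: "K \<ge> 1"
  shows "cond_prob_recover R n K j \<ge> 1 - 2 / real (card (carrier R))"
proof -
  interpret field R by (rule F)
  define S where "S = channel_set R n K"
  define D where "D = {H \<in> S. int_dependent R n K j H}"
  define B where "B = {H \<in> S. int_dependent R n K j H \<and> \<not> can_recover R n K j H}"
  define G where "G = {H \<in> S. int_dependent R n K j H \<and> can_recover R n K j H}"
  define q where "q = card (carrier R)"
  have finS: "finite S" unfolding S_def channel_set_def by (rule finite_PiE) (use fin in auto)
  have finD: "finite D" unfolding D_def using finS by simp
  have DGB: "D = G \<union> B" "G \<inter> B = {}" unfolding D_def G_def B_def by auto
  have cD: "card D = card G + card B" using DGB finD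
    using card_Un_disjoint[of G B] by auto
  have cnt: "card B * (q - 1) \<le> card D" using count_bad[OF fin jn] unfolding B_def D_def S_def q_def .
  have "{\<zero>\<^bsub>R\<^esub>, \<one>\<^bsub>R\<^esub>} \<subseteq> carrier R" by auto
  then have "card {\<zero>\<^bsub>R\<^esub>, \<one>\<^bsub>R\<^esub>} \<le> q" unfolding q_def using fin by (rule card_mono[rotated])
  then have q2: "q \<ge> 2" by simp
  have cp: "cond_prob_recover R n K j = real (card G) / real (card D)"
    unfolding cond_prob_recover_def G_def D_def S_def ..
  have "D \<noteq> {}" using dep_nonempty[OF K jn] unfolding D_def S_def .
  then have False: "card D \<noteq> 0" using finD by simp
  show ?thesis
  proof -
    from False have dpos: "real (card D) > 0" by simp
    have cnt': "real (card B) * (real q - 1) \<le> real (card D)"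
    proof -
      have "real (card B * (q - 1)) \<le> real (card D)" using cnt by (rule of_nat_mono)
      moreover have "real (q - 1) = real q - 1" using q2 by (simp add: of_nat_diff)
      ultimately show ?thesis by simp
    qed
    have qr: "real q \<ge> 2" using q2 by simp
    have key: "real (card B) * real q \<le> 2 * real (card D)"
    proof -
      have "real q \<le> 2 * (real q - 1)" using qr by simp
      then have "real (card B) * real q \<le> real (card B) * (2 * (real q - 1))"
        by (intro mult_left_mono) auto
      also have "\<dots> = 2 * (real (card B) * (real q - 1))" by simp
      also have "\<dots> \<le> 2 * real (card D)" using cnt' by simp
      finally show ?thesis .
    qed
    have "real (card G) / real (card D) = 1 - real (card B) / real (card D)"
      using cD dpos by (simp add: field_simps)
    moreover have "real (card B) / real (card D) \<le> 2 / real q"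
      using key dpos qr by (simp add: field_simps)
    ultimately show ?thesis using cp unfolding q_def by simp
  qed
qed

theorem lemma3:
  fixes n K j :: nat
  assumes "n \<ge> 2" and "K \<ge> 1" and "j < n"
  shows "\<exists>C::real. \<forall>R :: nat ring. field R \<and> finite (carrier R) \<longrightarrow>
           cond_prob_recover R n K j \<ge> 1 - C / real (card (carrier R))"
  using prob_bound[OF _ _ assms(3) assms(2)] by blast

end
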